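(* Let $p$ be an odd prime and $d$ a positive integer. Then $L(d+p^2)=L(d)+L(p^2+1)$.
   Context: For an odd prime $p$ and a positive integer $d$, define $$L(d)=\max_{1\le j\le p-1}\ \sum_{i=j}^{p-1}\left(\left\lfloor \frac{id}{p}\right\rfloor-\left\lfloor \frac{id}{p}-\left(1-\frac1p\right)\frac{jd}{p}\right\rfloor\right).$$ *)

theory Defs
  imports Complex_Main "HOL-Computational_Algebra.Primes"
begin

definition L :: "nat \<Rightarrow> nat \<Rightarrow> int" where
  "L p d = Max ((\<lambda>j. \<Sum>i=j..p-1.
        (\<lfloor>real (i*d) / real p\<rfloor>
         - \<lfloor>real (i*d) / real p - (1 - 1 / real p) * (real (j*d) / real p)\<rfloor>))
      ` {1..p-1})"

end

theory Submission
  imports Defs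
begin


definition F :: "nat \<Rightarrow> nat \<Rightarrow> nat \<Rightarrow> int" where
  "F p d j = (\<Sum>x<p-j. int ((x+j)*d div p) - int ((d*x + j*d div p) div p))"

lemma term2:
  fixes p d i j :: nat
  assumes "p > 0" "j \<le> i"
  shows "\<lfloor>real (i*d) / real p - (1 - 1 / real p) * (real (j*d) / real p)\<rfloor>
         = int ((d*(i-j) + j*d div p) div p)"
proof -
  have "real (i*d) / real p - (1 - 1 / real p) * (real (j*d) / real p)
        = real (d*(p*(i-j)+j)) / real (p*p)"
    using assms by (simp add: of_nat_diff field_simps)
  hence "\<lfloor>real (i*d) / real p - (1 - 1 / real p) * (real (j*d) / real p)\<rfloor>
        = int (d*(p*(i-j)+j) div (p*p))"
    by (metis floor_divide_of_nat_eq of_int_of_nat_eq)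
  also have "d*(p*(i-j)+j) div (p*p) = (d*(i-j) + j*d div p) div p"
  proof -
    have "d*(p*(i-j)+j) = p*(d*(i-j)) + j*d" by (simp add: algebra_simps)
    hence "d*(p*(i-j)+j) div p = d*(i-j) + j*d div p" using assms by simp
    thus ?thesis by (simp add: div_mult2_eq)
  qed
  finally show ?thesis .
qed

lemma sumF:
  fixes p d j :: nat
  assumes "p > 0" "1 \<le> j" "j \<le> p - 1"
  shows "(\<Sum>i=j..p-1. (\<lfloor>real (i*d) / real p\<rfloor>
         - \<lfloor>real (i*d) / real p - (1 - 1 / real p) * (real (j*d) / real p)\<rfloor>)) = F p d j"
proof -
  have "(\<Sum>i=j..p-1. (\<lfloor>real (i*d) / real p\<rfloor>
         - \<lfloor>real (i*d) / real p - (1 - 1 / real p) * (real (j*d) / real p)\<rfloor>))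
      = (\<Sum>i=j..p-1. int (i*d div p) - int ((d*(i-j) + j*d div p) div p))"
  proof (rule sum.cong[OF refl])
    fix i assume "i \<in> {j..p-1}"
    hence "j \<le> i" by simp
    have "\<lfloor>real (i*d) / real p\<rfloor> = int (i*d div p)"
      by (metis floor_divide_of_nat_eq of_int_of_nat_eq)
    thus "\<lfloor>real (i*d) / real p\<rfloor>
         - \<lfloor>real (i*d) / real p - (1 - 1 / real p) * (real (j*d) / real p)\<rfloor> =
        int (i*d div p) - int ((d*(i-j) + j*d div p) div p)"
      using term2[OF assms(1) \<open>j \<le> i\<close>, of d] by simp
  qed
  also have "\<dots> = (\<Sum>x<p-j. int ((x+j)*d div p) - int ((d*x + j*d div p) div p))"
  proof -
    have "{j..p-1} = (\<lambda>x. x+j) ` {..<p-j}"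
      proof (intro set_eqI iffI)
      fix i assume "i \<in> {j..p-1}"
      thus "i \<in> (\<lambda>x. x+j) ` {..<p-j}" using assms
        by (auto simp: image_iff intro!: bexI[of _ "i - j"])
    qed (use assms in auto)
    moreover have "inj_on (\<lambda>x. x+j) {..<p-j}" by (auto simp: inj_on_def)
    ultimately show ?thesis by (simp add: sum.reindex)
  qed
  finally show ?thesis by (simp add: F_def)
qed



lemma divadd: "(p::nat) > 0 \<Longrightarrow> (a + p*c) div p = a div p + c" by simp

lemma shiftF:
  fixes p d j :: nat
  assumes "p > 0" "j < p"
  shows "F p (d + p^2) j = F p d j + int ((p-1)*j*(p-j))"
proof -
  have t: "int ((x+j)*(d+p^2) div p) - int (((d+p^2)*x + j*(d+p^2) div p) div p)
      = int ((x+j)*d div p) - int ((d*x + j*d div p) div p) + int (p*j - j)" for x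
  proof -
    have a: "(x+j)*(d+p^2) div p = (x+j)*d div p + p*(x+j)"
    proof -
      have e: "(x+j)*(d+p^2) = (x+j)*d + p*(p*(x+j))" by (simp add: algebra_simps power2_eq_square)
      have "((x+j)*d + p*(p*(x+j))) div p = (x+j)*d div p + p*(x+j)" using assms(1) by (rule divadd)
      thus ?thesis unfolding e .
    qed
    have b: "j*(d+p^2) div p = j*d div p + p*j"
    proof -
      have e: "j*(d+p^2) = j*d + p*(p*j)" by (simp add: algebra_simps power2_eq_square)
      have "(j*d + p*(p*j)) div p = j*d div p + p*j" using assms(1) by (rule divadd)
      thus ?thesis unfolding e .
    qed
    have c: "((d+p^2)*x + j*(d+p^2) div p) div p = (d*x + j*d div p) div p + (p*x + j)"
    proof -
      have "(d+p^2)*x + j*(d+p^2) div p = (d*x + j*d div p) + p*(p*x+j)"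
        unfolding b by (simp add: algebra_simps power2_eq_square)
      moreover have "((d*x + j*d div p) + p*(p*x+j)) div p = (d*x + j*d div p) div p + (p*x + j)"
        using assms(1) by (rule divadd)
      ultimately show ?thesis by simp
    qed
    have "p*j \<ge> j" using assms by simp
    thus ?thesis using a c by (simp add: algebra_simps of_nat_diff)
  qed
  have "F p (d + p^2) j = (\<Sum>x<p-j. int ((x+j)*d div p) - int ((d*x + j*d div p) div p) + int (p*j - j))"
    unfolding F_def using t by simp
  also have "\<dots> = F p d j + int (p-j) * int (p*j-j)"
    by (simp add: sum.distrib F_def)
  also have "int (p-j) * int (p*j-j) = int ((p-1)*j*(p-j))"
    by (metis diff_mult_distrib mult.commute mult.left_commute mult_1 of_nat_mult)
  finally show ?thesis .
qed

lemma F1: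
  fixes p j :: nat
  assumes "j < p"
  shows "F p 1 j = 0"
  unfolding F_def using assms by (intro sum.neutral) auto

lemma diffF:
  fixes p d j :: nat
  assumes "Suc j < p"
  shows "F p d (Suc j) = F p d j + (\<Sum>x<p-j. int ((d*x + j*d div p) div p))
           - (\<Sum>x<p-Suc j. int ((d*x + (Suc j)*d div p) div p)) - int (j*d div p)"
proof -
  have e: "p - j = Suc (p - Suc j)" using assms by simp
  have "(\<Sum>x<p-j. int ((x+j)*d div p)) = int (j*d div p) + (\<Sum>x<p - Suc j. int ((x + Suc j)*d div p))"
    unfolding e sum.lessThan_Suc_shift by simp
  thus ?thesis unfolding F_def sum_subtractf by simp
qed



lemma chainM1:
  fixes p j e G P :: int
  assumes "j \<ge> 1" "P \<ge> 2" "p = P + 2*j + 1"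
    and "j*e < p*G" "p*G \<le> (j+1)*e" "G \<ge> 1"
  shows "P*(e-1) \<ge> j - G + 1"
proof -
  have "(2*j+3)*G \<le> p*G" using assms by (intro mult_right_mono) auto
  hence A: "(2*j+3)*G \<le> (j+1)*e" using assms(5) by linarith
  have "(j+1)*(2*G) < (j+1)*e" using A assms(6) by (simp add: algebra_simps)
  hence e2: "e > 2*G" using assms(1) by (simp add: mult_less_cancel_left_pos)
  have h: "G*(P+1) > j*(e-2*G)" using assms by (simp add: algebra_simps)
  show ?thesis
  proof (cases "j < G")
    case True
    have "P*(e-1) \<ge> 0" using assms e2 by simp
    thus ?thesis using True by simp
  next
    case False
    have "P*(e-1) \<ge> P*(2*G)" using assms e2 by (intro mult_left_mono) auto
    moreover have "j*(e-2*G) \<ge> j*1" using assms e2 by (intro mult_left_mono) auto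
    ultimately show ?thesis using h False by (simp add: algebra_simps)
  qed
qed

lemma ineqP:
  fixes p j e g g' X :: int
  assumes j1: "j \<ge> 1" and jp: "2*j+3 \<le> p" and X: "X = p-1-j" and e0: "e \<ge> 0"
    and g1: "p*g \<le> j*e" and g2: "j*e < p*g + p"
    and h1: "p*g' \<le> (j+1)*e" and h2: "(j+1)*e < p*g' + p"
  shows "e*X + (X+1)*g \<ge> e*j + X*g'"
proof -
  have p0: "p > 0" using j1 jp by simp
  have pM: "p*(g'-g) \<le> e + p - 1" using g2 h1 by (simp add: algebra_simps)
  have je0: "j*e \<ge> 0" using j1 e0 by simp
  have gpos: "g \<ge> 0"
  proof -
    have "p*(-1) < p*g" using g2 je0 by simp
    hence "-1 < g" using p0 by (subst (asm) mult_less_cancel_left_pos) auto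
    thus ?thesis by simp
  qed
  have gle: "g \<le> g'"
  proof -
    have "p*g < p*(g'+1)" using g1 h2 e0 by (simp add: algebra_simps)
    hence "g < g'+1" using p0 by (simp add: mult_less_cancel_left_pos)
    thus ?thesis by simp
  qed
  show ?thesis
  proof (cases "e \<ge> p")
    case True
    have Xj: "X - j \<ge> 2" using X jp by simp
    have "e*(X-j) \<ge> e*2" using Xj e0 by (intro mult_left_mono) auto
    hence "e*X - e*j \<ge> 2*e" by (simp add: right_diff_distrib)
    moreover have "X < p" "X \<ge> 0" using X j1 jp by simp_all
    moreover have "j*e = e*j" by simp
    ultimately have k: "e*X - X - j*e - 1 \<ge> 0" using True by linarith
    have k2: "(p-1)*(e*X - X - j*e - 1) \<ge> 0" using k p0 by (intro mult_nonneg_nonneg) auto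
    have X0: "X \<ge> 0" using X jp j1 by simp
    have "X*(p*(g'-g)) \<le> X*(e+p-1)" using pM X0 by (intro mult_left_mono) auto
    hence "p*(X*(e - (g'-g))) \<ge> p*(e*j - g)"
      using k2 g2 by (simp add: algebra_simps)
    hence "X*(e - (g'-g)) \<ge> e*j - g" using p0 by (simp add: mult_le_cancel_left_pos)
    thus ?thesis by (simp add: algebra_simps)
  next
    case False
    have "p*(g'-g) < p*2" using pM False by simp
    hence "g'-g < 2" using p0 by (simp add: mult_less_cancel_left_pos)
    hence cases: "g' = g \<or> g' = g+1" using gle by auto
    thus ?thesis
    proof
      assume "g' = g"
      have "e*X \<ge> e*j" using X jp e0 by (intro mult_left_mono) auto
      thus ?thesis using \<open>g' = g\<close> gpos by (simp add: algebra_simps)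
    next
      assume gg: "g' = g+1"
      have c: "(X-j)*(e-1) \<ge> j - g' + 1"
        apply (rule chainM1[of j "X-j" p e g'])
        using j1 jp X g2 h1 gg gpos by (auto simp: algebra_simps)
      thus ?thesis using gg by (simp add: algebra_simps)
    qed
  qed
qed



lemma card_le1:
  fixes p d c X :: nat
  assumes "prime p" "\<not> p dvd d" "X \<le> p"
  shows "card ({..<X} \<inter> {x. p dvd d*x + c}) \<le> 1"
proof -
  have "\<forall>a1 \<in> {..<X} \<inter> {x. p dvd d*x + c}. \<forall>a2 \<in> {..<X} \<inter> {x. p dvd d*x + c}. a1 = a2"
  proof (intro ballI, rule ccontr)
    fix a1 a2 assume A: "a1 \<in> {..<X} \<inter> {x. p dvd d*x + c}" "a2 \<in> {..<X} \<inter> {x. p dvd d*x + c}" "a1 \<noteq> a2"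
    have key: "\<And>u v. u < X \<Longrightarrow> v < X \<Longrightarrow> u < v \<Longrightarrow> p dvd d*u + c \<Longrightarrow> p dvd d*v + c \<Longrightarrow> False"
    proof -
      fix u v assume uv: "u < X" "v < X" "u < v" "p dvd d*u + c" "p dvd d*v + c"
      have "p dvd (d*v + c) - (d*u + c)" using uv by (intro dvd_diff_nat) auto
      moreover have "(d*v + c) - (d*u + c) = d*(v-u)" by (simp add: diff_mult_distrib2)
      ultimately have "p dvd d*(v-u)" by simp
      hence "p dvd (v-u)" using assms prime_dvd_mult_iff by blast
      moreover have "0 < v - u" "v - u < p" using uv assms by auto
      ultimately show False using nat_dvd_not_less by blast
    qed
    show False
    proof (cases "a1 < a2")
      case True thus False using key A by auto
    next
      case False hence "a2 < a1" using A by auto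
      thus False using key A by auto
    qed
  qed
  thus ?thesis using card_le_Suc0_iff_eq[of "{..<X} \<inter> {x. p dvd d*x + c}"] by simp
qed

lemma cnt1:
  fixes p d z X :: nat
  assumes "prime p" "\<not> p dvd d" "X \<le> p"
  shows "(\<Sum>x<X. int ((d*x + Suc z) div p) - int ((d*x + z) div p)) \<le> 1"
proof -
  have "int ((d*x + Suc z) div p) - int ((d*x + z) div p) = of_bool (p dvd d*x + Suc z)" for x
    using div_Suc[of "d*x+z" p] by (auto simp: dvd_eq_mod_eq_0)
  hence "(\<Sum>x<X. int ((d*x + Suc z) div p) - int ((d*x + z) div p))
      = int (card ({..<X} \<inter> {x. p dvd d*x + Suc z}))" by simp
  thus ?thesis using card_le1[OF assms, of "Suc z"] by simp
qed

lemma cntZ: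
  fixes p d z0 z1 X :: nat
  assumes "prime p" "\<not> p dvd d" "X \<le> p" "z0 \<le> z1"
  shows "(\<Sum>x<X. int ((d*x + z1) div p)) - (\<Sum>x<X. int ((d*x + z0) div p)) \<le> int z1 - int z0"
  using assms(4)
proof (induction z1 rule: dec_induct)
  case base thus ?case by simp
next
  case (step n)
  have "(\<Sum>x<X. int ((d*x + Suc n) div p)) - (\<Sum>x<X. int ((d*x + n) div p)) \<le> 1"
    using cnt1[OF assms(1-3), of n] by (simp add: sum_subtractf)
  thus ?case using step by simp
qed



lemma divb:
  fixes n p :: nat
  assumes "p > 0"
  shows "int p * int (n div p) \<le> int n" "int n < int p * int (n div p) + int p"
proof -
  have e: "p * (n div p) + n mod p = n" by simp
  have "n mod p < p" using assms by simp
  have e2: "int p * int (n div p) + int (n mod p) = int n" using e by (metis of_nat_add of_nat_mult)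
  have "int (n mod p) < int p" using \<open>n mod p < p\<close> by simp
  thus "int p * int (n div p) \<le> int n" "int n < int p * int (n div p) + int p"
    using e2 by linarith+
qed

lemma decI:
  fixes p j d q X :: int
  assumes "p \<ge> 3" "X = p-1-j" "2*j \<ge> p+1" "d \<ge> 0" "p*q \<le> j*d" "j*d < p*q+p"
  shows "d*X + q < p*(q+1)"
proof -
  have m1: "(2*p-1)*(2*j) \<ge> (2*p-1)*(p+1)" using assms by (intro mult_left_mono) auto
  have m2: "(2*p-1)*(2*j) = 4*(p*j) - 2*j" "(2*p-1)*(p+1) = 2*(p*p) + p - 1"
    "(p-1)*j = p*j - j" by (simp_all add: algebra_simps)
  have m3: "p*X = p*p - p - p*j" unfolding assms(2) by (simp add: algebra_simps)
  have pX: "p*X \<le> (p-1)*j" using m1 m2 m3 assms(1) by (smt (verit))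
  have "d*(p*X) \<le> d*((p-1)*j)" using pX assms by (intro mult_left_mono) auto
  moreover have "(p-1)*(j*d) < (p-1)*(p*q+p)" using assms by (intro mult_strict_left_mono) auto
  ultimately have "p*(d*X) < p*((p-1)*(q+1))" by (simp add: algebra_simps)
  hence "d*X < (p-1)*(q+1)" using assms by (simp add: mult_less_cancel_left_pos)
  thus ?thesis by (simp add: algebra_simps)
qed

lemma decF:
  fixes p d j :: nat
  assumes "p \<ge> 3" "Suc j < p" "p + 1 \<le> 2*j"
  shows "F p d (Suc j) \<le> F p d j"
proof -
  define q where "q = j*d div p"
  define q' where "q' = Suc j*d div p"
  define X where "X = p - Suc j"
  have pj: "p - j = Suc X" using assms unfolding X_def by simp
  have qq: "q \<le> q'" unfolding q_def q'_def by (intro div_le_mono) simp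
  have s1: "(\<Sum>x<X. int ((d*x + q) div p)) \<le> (\<Sum>x<X. int ((d*x + q') div p))"
    using qq by (intro sum_mono) (simp add: div_le_mono)
  have "int d * int X + int q < int p * (int q + 1)"
    apply (rule decI[of "int p" "int X" "int j"])
    using assms divb[of p "j*d"] unfolding X_def q_def by (auto simp: of_nat_diff)
  hence "d*X + q < (q+1)*p" by (simp add: algebra_simps flip: of_nat_mult of_nat_add)
  hence "(d*X + q) div p < q + 1" by (rule less_mult_imp_div_less)
  hence s2: "(d*X + q) div p \<le> q" by simp
  show ?thesis
    using diffF[OF assms(2), of d] s1 s2 unfolding pj sum.lessThan_Suc q_def[symmetric] q'_def[symmetric] X_def[symmetric]
    by simp
qed

lemma incF:
  fixes p d j :: nat
  assumes "prime p" "1 \<le> j" "2*j+3 \<le> p"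
  shows "F p d j \<le> F p d (Suc j)"
proof -
  have p0: "p > 0" using assms by simp
  define q where "q = j*d div p"
  define q' where "q' = Suc j*d div p"
  define X where "X = p - Suc j"
  have sj: "Suc j < p" using assms by simp
  have pj: "p - j = Suc X" using assms unfolding X_def by simp
  have "F p d (Suc j) - F p d j = int ((d*X + q) div p) + (\<Sum>x<X. int ((d*x + q) div p))
       - (\<Sum>x<X. int ((d*x + q') div p)) - int q"
    using diffF[OF sj, of d] unfolding pj sum.lessThan_Suc q_def[symmetric] q'_def[symmetric] X_def[symmetric]
    by simp
  moreover have "int ((d*X + q) div p) + (\<Sum>x<X. int ((d*x + q) div p))
       - (\<Sum>x<X. int ((d*x + q') div p)) - int q \<ge> 0"
  proof (cases "p dvd d")
    case False
    have qq: "q \<le> q'" unfolding q_def q'_def by (intro div_le_mono) simp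
    have c: "(\<Sum>x<X. int ((d*x + q') div p)) - (\<Sum>x<X. int ((d*x + q) div p)) \<le> int q' - int q"
      using cntZ[OF assms(1) False _ qq, of X] unfolding X_def by simp
    have "Suc j \<le> X" unfolding X_def using assms by simp
    hence "d * Suc j \<le> d * X" by (rule mult_le_mono2)
    hence "Suc j * d \<le> d*X + q" by (simp add: mult.commute)
    hence "q' \<le> (d*X + q) div p" unfolding q'_def by (rule div_le_mono)
    thus ?thesis using c by linarith
  next
    case True
    then obtain e where de: "d = p*e" by blast
    have qe: "q = j*e" unfolding q_def de using p0 by simp
    have qe': "q' = Suc j*e" unfolding q'_def de using p0 by simp
    have a: "(d*x + q) div p = e*x + j*e div p" for x
    proof -
      have "d*x + q = j*e + p*(e*x)" unfolding de qe by (simp add: algebra_simps)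
      thus ?thesis using divadd[OF p0, of "j*e" "e*x"] by simp
    qed
    have b: "(d*x + q') div p = e*x + Suc j*e div p" for x
    proof -
      have "d*x + q' = Suc j*e + p*(e*x)" unfolding de qe' by (simp add: algebra_simps)
      thus ?thesis using divadd[OF p0, of "Suc j*e" "e*x"] by simp
    qed
    define g where "g = j*e div p"
    define g' where "g' = Suc j*e div p"
    have "(\<Sum>x<X. int ((d*x + q) div p)) - (\<Sum>x<X. int ((d*x + q') div p)) = int X * (int g - int g')"
      unfolding a b g_def[symmetric] g'_def[symmetric] sum_subtractf[symmetric] by (simp add: algebra_simps)
    moreover have "int e * int X + (int X + 1) * int g \<ge> int e * int j + int X * int g'"
      apply (rule ineqP[of "int j" "int p"])
      using assms divb[OF p0, of "j*e"] divb[OF p0, of "Suc j*e"] unfolding X_def g_def g'_def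
      by (auto simp: of_nat_diff algebra_simps)
    moreover have "int ((d*X + q) div p) = int e * int X + int g" unfolding a g_def by simp
    moreover have "int X * (int g - int g') = int X * int g - int X * int g'" by (simp add: algebra_simps)
    moreover have "int q = int e * int j" unfolding qe by simp
    ultimately show ?thesis by (simp add: algebra_simps)
  qed
  ultimately show ?thesis by simp
qed



lemma LF:
  assumes "p > 0"
  shows "L p d = Max (F p d ` {1..p-1})"
proof -
  have "(\<lambda>j. \<Sum>i=j..p-1.
        (\<lfloor>real (i*d) / real p\<rfloor>
         - \<lfloor>real (i*d) / real p - (1 - 1 / real p) * (real (j*d) / real p)\<rfloor>)) ` {1..p-1}
      = F p d ` {1..p-1}"
    using sumF[OF assms] by (intro image_cong) auto
  thus ?thesis unfolding L_def by simp
qed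

theorem mainTheorem3:
  fixes p d :: nat
  assumes "prime p" and "odd p" and "d > 0"
  shows "L p (d + p^2) = L p d + L p (p^2 + 1)"
proof -
  have p2: "p \<ge> 2" using assms(1) prime_ge_2_nat by blast
  define m where "m = (p - 1) div 2"
  have pm: "p = 2*m + 1" using assms(2) p2 unfolding m_def by presburger
  have m1: "m \<ge> 1" using pm p2 by simp
  have p3: "p \<ge> 3" using pm m1 by simp
  define S where "S = {1..p-1}"
  define Q where "Q j = int ((p-1)*j*(p-j))" for j
  have inc: "F p d j \<le> F p d k" if "1 \<le> j" "j \<le> k" "k \<le> m" for j k
    using that(2,3)
  proof (induction k rule: dec_induct)
    case base thus ?case by simp
  next
    case (step k)
    have "F p d k \<le> F p d (Suc k)"
      using incF[OF assms(1), of k d] that(1) step pm by simp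
    thus ?case using step by simp
  qed
  have dec: "F p d k \<le> F p d j" if "m+1 \<le> j" "j \<le> k" "k \<le> p-1" for j k
    using that(2,3)
  proof (induction k rule: dec_induct)
    case base thus ?case by simp
  next
    case (step k)
    have "F p d (Suc k) \<le> F p d k"
      using decF[OF p3, of k d] that(1) step pm by simp
    thus ?case using step by simp
  qed
  define j0 where "j0 = (if F p d (m+1) \<le> F p d m then m else m+1)"
  have j0S: "j0 \<in> S" unfolding j0_def S_def using pm m1 by auto
  have Fmax: "F p d j \<le> F p d j0" if "j \<in> S" for j
  proof (cases "j \<le> m")
    case True
    hence "F p d j \<le> F p d m" using inc[of j m] that unfolding S_def by simp
    thus ?thesis unfolding j0_def by auto
  next
    case False
    hence "F p d j \<le> F p d (m+1)" using dec[of "m+1" j] that pm unfolding S_def by simp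
    thus ?thesis unfolding j0_def by auto
  qed
  have Qm: "Q m = Q (m+1)" unfolding Q_def pm by (simp add: algebra_simps)
  have Qj0: "Q j0 = Q m" unfolding j0_def using Qm by simp
  have Qmax: "Q j \<le> Q j0" if "j \<in> S" for j
  proof -
    have jp: "j \<le> p" using that unfolding S_def by auto
    have "(int j - int m) * (int j - int m - 1) \<ge> 0"
    proof (cases "j \<le> m")
      case True thus ?thesis by (intro mult_nonpos_nonpos) auto
    next
      case False thus ?thesis by (intro mult_nonneg_nonneg) auto
    qed
    hence "int j * (int p - int j) \<le> int m * (int p - int m)" unfolding pm by (simp add: algebra_simps)
    hence "int (p-1) * (int j * (int p - int j)) \<le> int (p-1) * (int m * (int p - int m))"
      by (intro mult_left_mono) auto
    moreover have "m \<le> p" using pm by simp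
    moreover have qx: "Q x = int (p-1) * (int x * (int p - int x))" if "x \<le> p" for x
      unfolding Q_def using that by (simp add: of_nat_diff mult.assoc)
    ultimately have "Q j \<le> Q m" using jp by simp
    thus ?thesis using Qj0 by simp
  qed
  have p0: "p > 0" using p2 by simp
  have "L p (d + p^2) = Max ((\<lambda>j. F p d j + Q j) ` S)"
  proof -
    have "F p (d + p^2) ` S = (\<lambda>j. F p d j + Q j) ` S"
      using shiftF[OF p0] unfolding S_def Q_def by (intro image_cong) auto
    thus ?thesis using LF[OF p0, of "d + p^2"] unfolding S_def by simp
  qed
  also have "\<dots> = F p d j0 + Q j0"
    using Fmax Qmax j0S unfolding S_def by (intro Max_eqI) (auto intro: add_mono)
  finally have A: "L p (d + p^2) = F p d j0 + Q j0" .
  have B: "L p d = F p d j0"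
    using LF[OF p0, of d] Fmax j0S unfolding S_def by (auto intro!: Max_eqI)
  have "L p (p^2 + 1) = Max (Q ` S)"
  proof -
    have "F p (1 + p^2) ` S = Q ` S"
      using shiftF[OF p0, of _ 1] F1[of _ p] unfolding S_def Q_def by (intro image_cong) auto
    thus ?thesis using LF[OF p0, of "1 + p^2"] unfolding S_def by (simp add: add.commute)
  qed
  also have "\<dots> = Q j0" using Qmax j0S by (intro Max_eqI) (auto simp: S_def)
  finally have C: "L p (p^2 + 1) = Q j0" .
  show ?thesis using A B C by simp
qed

end
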